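(* Let $D$ be an integral domain, $\star$ a semistar operation on $D$, $T$ an overring of $D$ and $\star'$ a semistar operation on $T$; write $\ell=\ell_{\star,T}$. Then: (1) $\ell$ is a stable semistar operation on $T$; (2) if $T$ is $(\star,\star')$-linked to $D$, then $\ell\le\widetilde{\star'}\le\star'_f$; in particular $T$ is $(\ell,\star')$-linked to $T$; (3) $T$ is $(\star,\ell)$-linked to $D$; in particular $D$ is $(\star,\tilde\star)$-linked to $D$; (4) $\ell$ is of finite type on $T$ and $\widetilde{\ell}=\ell$; (5) $\ell$ is the unique minimal element of the set $\{\ast_f:\ \ast$ a semistar operation on $T$ such that $T$ is $(\star,\ast)$-linked to $D\}$; (6) $T$ is $(\star,\star')$-linked to $D$ if and only if $T$ is $(\ell,\star')$-linked to $T$; (7) $T$ is $(\star,\star')$-linked to $D$ if and only if $\ell\le\star'_f$.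
   Context: Let $D$ be an integral domain with quotient field $K$. $\overline{\mathbf F}(D)$ denotes the set of all nonzero $D$-submodules of $K$ and $\mathbf f(D)$ the set of nonzero finitely generated $D$-submodules of $K$. A semistar operation on $D$ is a map $\star:\overline{\mathbf F}(D)\to\overline{\mathbf F}(D)$, $E\mapsto E^\star$, such that for all $0\ne x\in K$ and $E,F\in\overline{\mathbf F}(D)$: (1) $(xE)^\star=xE^\star$; (2) $E\subseteq F\Rightarrow E^\star\subseteq F^\star$; (3) $E\subseteq E^\star$ and $(E^\star)^\star=E^\star$. $\star_1\le\star_2$ means $E^{\star_1}\subseteq E^{\star_2}$ for all $E$. $\star$ is stable if $(E\cap F)^\star=E^\star\cap F^\star$ for all $E,F$. $\star_f$ is defined by $E^{\star_f}=\bigcup\{F^\star:F\in\mathbf f(D),F\subseteq E\}$; $\star$ is of finite type if $\star=\star_f$. A nonzero ideal $I$ of $D$ is a quasi-$\star$-ideal if $I^\star\cap D=I$; a quasi-$\star$-prime is a prime quasi-$\star$-ideal; a quasi-$\star$-maximal ideal is a maximal element among proper quasi-$\star$-ideals; $\mathcal M(\star_f)$ is the set of quasi-$\star_f$-maximal ideals, and $E^{\tilde\star}=\bigcap\{ED_Q:Q\in\mathcal M(\star_f)\}$ (equal to $K$ if $\mathcal M(\star_f)=\emptyset$). An overring of $D$ is a ring $T$ with $D\subseteq T\subseteq K$; all notions are defined analogously on $T$. $T$ is $(\star,\star')$-linked to $D$ if for every nonzero finitely generated ideal $F\subseteq D$ with $F^\star=D^\star$ one has $(FT)^{\star'}=T^{\star'}$.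 The semistar operation $\ell_{\star,T}$ on $T$ is defined by $E^{\ell_{\star,T}}=\bigcap\{ET_{D\setminus P}: P$ a quasi-$\star_f$-prime ideal of $D\}$ for $E\in\overline{\mathbf F}(T)$ (equal to $K$ if there are none). *)

theory Defs
  imports Main
begin

text \<open>The quotient field K of D is the ambient type 'a (a field); D is a subring of it
  such that every element is a fraction of elements of D.\<close>

definition subring :: "'a::field set \<Rightarrow> bool" where
  "subring R \<longleftrightarrow> 0 \<in> R \<and> 1 \<in> R \<and> (\<forall>a\<in>R. \<forall>b\<in>R. a + b \<in> R \<and> a - b \<in> R \<and> a * b \<in> R)"

definition is_quotient_field_of :: "'a::field set \<Rightarrow> bool" where
  "is_quotient_field_of R \<longleftrightarrow> (\<forall>x. \<exists>a\<in>R. \<exists>b\<in>R. b \<noteq> 0 \<and> x = a / b)"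

definition submod :: "'a::field set \<Rightarrow> 'a set \<Rightarrow> bool" where
  "submod R E \<longleftrightarrow> 0 \<in> E \<and> (\<forall>x\<in>E. \<forall>y\<in>E. x + y \<in> E) \<and> (\<forall>r\<in>R. \<forall>x\<in>E. r * x \<in> E)"

definition Fbar :: "'a::field set \<Rightarrow> 'a set set" where
  "Fbar R = {E. submod R E \<and> E \<noteq> {0}}"

definition mod_gen :: "'a::field set \<Rightarrow> 'a set \<Rightarrow> 'a set" where
  "mod_gen R S = {(\<Sum>s\<in>A. c s * s) | A c. finite A \<and> A \<subseteq> S \<and> (\<forall>s\<in>A. c s \<in> R)}"

definition fgF :: "'a::field set \<Rightarrow> 'a set set" where
  "fgF R = {E. \<exists>S. finite S \<and> E = mod_gen R S \<and> E \<noteq> {0}}"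

definition semistar :: "'a::field set \<Rightarrow> ('a set \<Rightarrow> 'a set) \<Rightarrow> bool" where
  "semistar R st \<longleftrightarrow> (\<forall>E\<in>Fbar R. st E \<in> Fbar R
     \<and> (\<forall>x. x \<noteq> 0 \<longrightarrow> st ((\<lambda>e. x * e) ` E) = (\<lambda>e. x * e) ` st E)
     \<and> (\<forall>F\<in>Fbar R. E \<subseteq> F \<longrightarrow> st E \<subseteq> st F)
     \<and> E \<subseteq> st E \<and> st (st E) = st E)"

definition sle :: "'a::field set \<Rightarrow> ('a set \<Rightarrow> 'a set) \<Rightarrow> ('a set \<Rightarrow> 'a set) \<Rightarrow> bool" where
  "sle R s1 s2 \<longleftrightarrow> (\<forall>E\<in>Fbar R. s1 E \<subseteq> s2 E)"

definition stable :: "'a::field set \<Rightarrow> ('a set \<Rightarrow> 'a set) \<Rightarrow> bool" where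
  "stable R st \<longleftrightarrow> (\<forall>E\<in>Fbar R. \<forall>F\<in>Fbar R. st (E \<inter> F) = st E \<inter> st F)"

definition star_f :: "'a::field set \<Rightarrow> ('a set \<Rightarrow> 'a set) \<Rightarrow> 'a set \<Rightarrow> 'a set" where
  "star_f R st E = \<Union> {st F | F. F \<in> fgF R \<and> F \<subseteq> E}"

definition finite_type :: "'a::field set \<Rightarrow> ('a set \<Rightarrow> 'a set) \<Rightarrow> bool" where
  "finite_type R st \<longleftrightarrow> (\<forall>E\<in>Fbar R. st E = star_f R st E)"

definition ideal_of :: "'a::field set \<Rightarrow> 'a set \<Rightarrow> bool" where
  "ideal_of R I \<longleftrightarrow> I \<subseteq> R \<and> submod R I"

definition quasi_ideal :: "'a::field set \<Rightarrow> ('a set \<Rightarrow> 'a set) \<Rightarrow> 'a set \<Rightarrow> bool" where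
  "quasi_ideal R st I \<longleftrightarrow> ideal_of R I \<and> I \<noteq> {0} \<and> st I \<inter> R = I"

definition quasi_prime :: "'a::field set \<Rightarrow> ('a set \<Rightarrow> 'a set) \<Rightarrow> 'a set \<Rightarrow> bool" where
  "quasi_prime R st P \<longleftrightarrow> quasi_ideal R st P \<and> P \<noteq> R
     \<and> (\<forall>a\<in>R. \<forall>b\<in>R. a * b \<in> P \<longrightarrow> a \<in> P \<or> b \<in> P)"

definition quasi_max :: "'a::field set \<Rightarrow> ('a set \<Rightarrow> 'a set) \<Rightarrow> 'a set \<Rightarrow> bool" where
  "quasi_max R st Q \<longleftrightarrow> quasi_ideal R st Q \<and> Q \<noteq> R
     \<and> (\<forall>I. quasi_ideal R st I \<and> I \<noteq> R \<and> Q \<subseteq> I \<longrightarrow> I = Q)"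

text \<open>E S^{-1}: fractions e/s with e in E and s in S (for E a module over the base ring,
  this is the module E R_S)\<close>
definition loc :: "'a::field set \<Rightarrow> 'a set \<Rightarrow> 'a set" where
  "loc E S = {e / s | e s. e \<in> E \<and> s \<in> S}"

text \<open>star tilde on R (intersection over the empty family is UNIV = K)\<close>
definition tilde :: "'a::field set \<Rightarrow> ('a set \<Rightarrow> 'a set) \<Rightarrow> 'a set \<Rightarrow> 'a set" where
  "tilde R st E = \<Inter> {loc E (R - Q) | Q. quasi_max R (star_f R st) Q}"

text \<open>ell_{star,T}: E |-> intersection of E T_{D\P} over quasi-star_f-primes P of D\<close>
definition ell :: "'a::field set \<Rightarrow> ('a set \<Rightarrow> 'a set) \<Rightarrow> 'a set \<Rightarrow> 'a set" where
  "ell D st E = \<Inter> {loc E (D - P) | P. quasi_prime D (star_f D st) P}"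

definition linked :: "'a::field set \<Rightarrow> 'a set \<Rightarrow> ('a set \<Rightarrow> 'a set) \<Rightarrow> ('a set \<Rightarrow> 'a set) \<Rightarrow> bool" where
  "linked D T s1 s2 \<longleftrightarrow> (\<forall>F. F \<in> fgF D \<and> F \<subseteq> D \<and> s1 F = s1 D \<longrightarrow> s2 (mod_gen T F) = s2 T)"

end

theory Submission
  imports Defs
begin

lemma subringD:
  assumes "subring R"
  shows "0 \<in> R" "1 \<in> R" "a \<in> R \<Longrightarrow> b \<in> R \<Longrightarrow> a + b \<in> R"
    "a \<in> R \<Longrightarrow> b \<in> R \<Longrightarrow> a - b \<in> R" "a \<in> R \<Longrightarrow> b \<in> R \<Longrightarrow> a * b \<in> R"
  using assms unfolding subring_def by auto

lemma submodD:
  assumes "submod R E"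
  shows "0 \<in> E" "x \<in> E \<Longrightarrow> y \<in> E \<Longrightarrow> x + y \<in> E" "r \<in> R \<Longrightarrow> x \<in> E \<Longrightarrow> r * x \<in> E"
  using assms unfolding submod_def by auto

lemma mg_mem: "finite A \<Longrightarrow> A \<subseteq> S \<Longrightarrow> (\<forall>s\<in>A. c s \<in> R) \<Longrightarrow> (\<Sum>s\<in>A. c s * s) \<in> mod_gen R S"
  unfolding mod_gen_def by blast

lemma mg_obtain:
  assumes "x \<in> mod_gen R S"
  obtains A c where "x = (\<Sum>s\<in>A. c s * s)" "finite A" "A \<subseteq> S" "\<forall>s\<in>A. c s \<in> R"
  using assms unfolding mod_gen_def by blast

lemma mg_least:
  assumes "submod R E" "S \<subseteq> E"
  shows "mod_gen R S \<subseteq> E"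
proof
  fix x assume "x \<in> mod_gen R S"
  then obtain A c where x: "x = (\<Sum>s\<in>A. c s * s)" "finite A" "A \<subseteq> S" "\<forall>s\<in>A. c s \<in> R"
    unfolding mod_gen_def by blast
  have "A \<subseteq> S \<longrightarrow> (\<forall>s\<in>A. c s \<in> R) \<longrightarrow> (\<Sum>s\<in>A. c s * s) \<in> E" using x(2)
  proof (induction A rule: finite_induct)
    case empty then show ?case using assms(1) by (simp add: submod_def)
  next
    case (insert a A)
    show ?case
    proof (intro impI)
      assume h: "insert a A \<subseteq> S" "\<forall>s\<in>insert a A. c s \<in> R"
      have "c a * a \<in> E" using h assms by (auto intro: submodD)
      moreover have "(\<Sum>s\<in>A. c s * s) \<in> E" using insert h by auto
      ultimately show "(\<Sum>s\<in>insert a A. c s * s) \<in> E"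
        using insert(1,2) submodD(2)[OF assms(1)] by simp
    qed
  qed
  then show "x \<in> E" using x by blast
qed

lemma mg_base: "subring R \<Longrightarrow> s \<in> S \<Longrightarrow> s \<in> mod_gen R S"
  using mg_mem[of "{s}" S "\<lambda>_. 1" R] subringD(2)[of R] by simp

lemma mg_mono_set: "S \<subseteq> S' \<Longrightarrow> mod_gen R S \<subseteq> mod_gen R S'"
  unfolding mod_gen_def by blast

lemma mg_mono_ring: "R \<subseteq> R' \<Longrightarrow> mod_gen R S \<subseteq> mod_gen R' S"
  unfolding mod_gen_def by blast

lemma mg_submod:
  assumes R: "subring R"
  shows "submod R (mod_gen R S)"
proof -
  have z: "0 \<in> mod_gen R S" using mg_mem[of "{}" S "\<lambda>_. 0" R] by simp
  have add: "x + y \<in> mod_gen R S" if hx: "x \<in> mod_gen R S" and hy: "y \<in> mod_gen R S" for x y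
  proof -
    obtain A c where A: "x = (\<Sum>s\<in>A. c s * s)" "finite A" "A \<subseteq> S" "\<forall>s\<in>A. c s \<in> R"
      using hx by (rule mg_obtain)
    obtain B d where B: "y = (\<Sum>s\<in>B. d s * s)" "finite B" "B \<subseteq> S" "\<forall>s\<in>B. d s \<in> R"
      using hy by (rule mg_obtain)
    define e where "e s = (if s\<in>A then c s else 0) + (if s \<in> B then d s else 0)" for s
    have "(\<Sum>s\<in>A\<union>B. e s * s) = (\<Sum>s\<in>A\<union>B. (if s\<in>A then c s * s else 0))
        + (\<Sum>s\<in>A\<union>B. (if s\<in>B then d s * s else 0))"
      proof -
      have "e s * s = (if s\<in>A then c s * s else 0) + (if s\<in>B then d s * s else 0)" for s
        unfolding e_def by (simp add: distrib_right)
      then show ?thesis by (simp add: sum.distrib)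
    qed
    also have "(\<Sum>s\<in>A\<union>B. (if s\<in>A then c s * s else 0)) = (\<Sum>s\<in>A. c s * s)"
      by (rule sum.mono_neutral_cong_right) (use A(2) B(2) in auto)
    also have "(\<Sum>s\<in>A\<union>B. (if s\<in>B then d s * s else 0)) = (\<Sum>s\<in>B. d s * s)"
      by (rule sum.mono_neutral_cong_right) (use A(2) B(2) in auto)
    finally have "x + y = (\<Sum>s\<in>A\<union>B. e s * s)" using A B by simp
    moreover have "\<forall>s\<in>A\<union>B. e s \<in> R"
      using A(4) B(4) subringD[OF R] unfolding e_def by auto
    ultimately show ?thesis using mg_mem[of "A\<union>B" S e R] A B by auto
  qed
  have mul: "r * x \<in> mod_gen R S" if hr: "r \<in> R" and hx: "x \<in> mod_gen R S" for r x
  proof -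
    obtain A c where A: "x = (\<Sum>s\<in>A. c s * s)" "finite A" "A \<subseteq> S" "\<forall>s\<in>A. c s \<in> R"
      using hx by (rule mg_obtain)
    have "r * x = (\<Sum>s\<in>A. (r * c s) * s)" using A(1) by (simp add: sum_distrib_left mult.assoc)
    moreover have "\<forall>s\<in>A. r * c s \<in> R" using A(4) hr subringD[OF R] by auto
    ultimately show ?thesis using mg_mem[of A S "\<lambda>s. r * c s" R] A by auto
  qed
  show ?thesis unfolding submod_def using z add mul by blast
qed

lemma mg_self: "subring R \<Longrightarrow> submod R E \<Longrightarrow> mod_gen R E = E"
  using mg_least[of R E E] mg_base[of R] by blast

lemma submod_scale: "submod R E \<Longrightarrow> submod R ((*) x ` E)"
  unfolding submod_def
  by (auto simp: image_iff) (metis distrib_left mult.left_commute)+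

lemma mg_scale:
  assumes R: "subring R" and x: "x \<noteq> 0"
  shows "mod_gen R ((*) x ` S) = (*) x ` mod_gen R S"
proof
  show "mod_gen R ((*) x ` S) \<subseteq> (*) x ` mod_gen R S"
    by (rule mg_least) (use submod_scale mg_submod[OF R] mg_base[OF R] in auto)
  show "(*) x ` mod_gen R S \<subseteq> mod_gen R ((*) x ` S)"
  proof
    fix y assume "y \<in> (*) x ` mod_gen R S"
    then obtain z where z: "z \<in> mod_gen R S" "y = x * z" by auto
    have "mod_gen R S \<subseteq> (*) (1/x) ` mod_gen R ((*) x ` S)"
    proof (rule mg_least)
      show "submod R ((*) (1 / x) ` mod_gen R ((*) x ` S))" by (rule submod_scale, rule mg_submod[OF R])
      show "S \<subseteq> (*) (1 / x) ` mod_gen R ((*) x ` S)"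
      proof
        fix s assume "s \<in> S"
        then have "x * s \<in> mod_gen R ((*) x ` S)" using mg_base[OF R, of "x*s" "(*) x ` S"] by auto
        moreover have "s = (1/x) * (x * s)" using x by simp
        ultimately show "s \<in> (*) (1 / x) ` mod_gen R ((*) x ` S)" by blast
      qed
    qed
    then obtain w where "w \<in> mod_gen R ((*) x ` S)" "z = (1/x) * w" using z by auto
    then show "y \<in> mod_gen R ((*) x ` S)" using z x by simp
  qed
qed

lemma mg_zero: "subring R \<Longrightarrow> S \<subseteq> {0} \<Longrightarrow> mod_gen R S \<subseteq> {0}"
  by (rule mg_least) (auto simp: submod_def)

lemma mg_two_rings:
  assumes "subring D" "subring T" "D \<subseteq> T"
  shows "mod_gen T (mod_gen D S) = mod_gen T S"
proof
  show "mod_gen T (mod_gen D S) \<subseteq> mod_gen T S"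
    by (rule mg_least) (use mg_submod[OF assms(2)] mg_mono_ring[OF assms(3)] in auto)
  show "mod_gen T S \<subseteq> mod_gen T (mod_gen D S)"
    by (rule mg_mono_set) (use mg_base[OF assms(1)] in auto)
qed

lemma R_Fbar: "subring R \<Longrightarrow> R \<in> Fbar R"
  unfolding Fbar_def submod_def subring_def by auto

lemma fgF_Fbar: "subring R \<Longrightarrow> F \<in> fgF R \<Longrightarrow> F \<in> Fbar R"
  unfolding fgF_def Fbar_def using mg_submod by blast

lemma semistarD:
  assumes "semistar R st" "E \<in> Fbar R"
  shows "st E \<in> Fbar R" "x \<noteq> 0 \<Longrightarrow> st ((*) x ` E) = (*) x ` st E"
    "F \<in> Fbar R \<Longrightarrow> E \<subseteq> F \<Longrightarrow> st E \<subseteq> st F" "E \<subseteq> st E" "st (st E) = st E"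
  using assms unfolding semistar_def by auto

lemma Fbar_submod: "E \<in> Fbar R \<Longrightarrow> submod R E"
  unfolding Fbar_def by auto

lemma Fbar_nz: "E \<in> Fbar R \<Longrightarrow> submod R E \<Longrightarrow> \<exists>e\<in>E. e \<noteq> 0"
  unfolding Fbar_def submod_def by auto



lemma sf_mem: "x \<in> star_f R st E \<longleftrightarrow> (\<exists>F. F \<in> fgF R \<and> F \<subseteq> E \<and> x \<in> st F)"
  unfolding star_f_def by blast

lemma sf_mono: "E \<subseteq> E' \<Longrightarrow> star_f R st E \<subseteq> star_f R st E'"
  unfolding star_f_def by blast

lemma sf_fg: "F \<in> fgF R \<Longrightarrow> F \<subseteq> E \<Longrightarrow> st F \<subseteq> star_f R st E"
  unfolding star_f_def by blast

lemma fgF_obtain: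
  assumes "F \<in> fgF R"
  obtains S where "finite S" "F = mod_gen R S" "F \<noteq> {0}"
  using assms unfolding fgF_def by blast

lemma fgF_I: "finite S \<Longrightarrow> mod_gen R S \<noteq> {0} \<Longrightarrow> mod_gen R S \<in> fgF R"
  unfolding fgF_def by blast

lemma sf_le:
  assumes "subring R" "semistar R st" "E \<in> Fbar R"
  shows "star_f R st E \<subseteq> st E"
proof
  fix x assume "x \<in> star_f R st E"
  then obtain F where F: "F \<in> fgF R" "F \<subseteq> E" "x \<in> st F" by (auto simp: sf_mem)
  then show "x \<in> st E" using semistarD(3)[OF assms(2) fgF_Fbar[OF assms(1) F(1)] assms(3)] by blast
qed

lemma fg_pair:
  assumes R: "subring R" and E: "submod R E" and e: "e \<in> E" "e \<noteq> 0" and x: "x \<in> E"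
  shows "mod_gen R {e,x} \<in> fgF R" "mod_gen R {e,x} \<subseteq> E" "x \<in> mod_gen R {e,x}"
proof -
  show "mod_gen R {e,x} \<subseteq> E" by (rule mg_least[OF E]) (use e x in auto)
  show "x \<in> mod_gen R {e,x}" by (rule mg_base[OF R]) simp
  have "e \<in> mod_gen R {e,x}" by (rule mg_base[OF R]) simp
  then show "mod_gen R {e,x} \<in> fgF R" using e by (intro fgF_I) auto
qed

lemma sf_incl:
  assumes R: "subring R" and ss: "semistar R st" and E: "E \<in> Fbar R"
  shows "E \<subseteq> star_f R st E"
proof
  fix x assume x: "x \<in> E"
  obtain e where e: "e \<in> E" "e \<noteq> 0" using E unfolding Fbar_def submod_def by auto
  note fp = fg_pair[OF R Fbar_submod[OF E] e x]
  have "x \<in> st (mod_gen R {e,x})"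
    using semistarD(4)[OF ss fgF_Fbar[OF R fp(1)]] fp(3) by blast
  then show "x \<in> star_f R st E" using fp by (auto simp: sf_mem)
qed

lemma sf_add:
  assumes R: "subring R" and ss: "semistar R st" and E: "submod R E"
    and x: "x \<in> star_f R st E" and y: "y \<in> star_f R st E"
  shows "x + y \<in> star_f R st E"
proof -
  obtain F1 where F1: "F1 \<in> fgF R" "F1 \<subseteq> E" "x \<in> st F1" using x by (auto simp: sf_mem)
  obtain F2 where F2: "F2 \<in> fgF R" "F2 \<subseteq> E" "y \<in> st F2" using y by (auto simp: sf_mem)
  obtain S1 where S1: "finite S1" "F1 = mod_gen R S1" "F1 \<noteq> {0}" using F1(1) by (rule fgF_obtain)
  obtain S2 where S2: "finite S2" "F2 = mod_gen R S2" "F2 \<noteq> {0}" using F2(1) by (rule fgF_obtain)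
  define F where "F = mod_gen R (S1 \<union> S2)"
  have sub1: "F1 \<subseteq> F" "F2 \<subseteq> F" unfolding F_def S1(2) S2(2) by (auto intro!: mg_mono_set)
  have FF: "F \<in> fgF R"
  proof -
    have "F \<noteq> {0}" using sub1 S1(3) S1(2) submodD(1)[OF mg_submod[OF R, of S1]] by blast
    then show ?thesis unfolding F_def using S1(1) S2(1) by (intro fgF_I) auto
  qed
  have FE: "F \<subseteq> E" unfolding F_def
    by (rule mg_least[OF E]) (use S1 S2 F1 F2 mg_base[OF R, of _ S1] mg_base[OF R, of _ S2] in blast)
  have "st F1 \<subseteq> st F" "st F2 \<subseteq> st F"
    using semistarD(3)[OF ss fgF_Fbar[OF R F1(1)] fgF_Fbar[OF R FF]]
      semistarD(3)[OF ss fgF_Fbar[OF R F2(1)] fgF_Fbar[OF R FF]] sub1 by auto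
  then have "x + y \<in> st F"
    using F1 F2 submodD(2)[OF Fbar_submod[OF semistarD(1)[OF ss fgF_Fbar[OF R FF]]]] by blast
  then show ?thesis using FF FE by (auto simp: sf_mem)
qed

lemma sf_mul:
  assumes R: "subring R" and ss: "semistar R st" and r: "r \<in> R" and x: "x \<in> star_f R st E"
  shows "r * x \<in> star_f R st E"
proof -
  obtain F where F: "F \<in> fgF R" "F \<subseteq> E" "x \<in> st F" using x by (auto simp: sf_mem)
  have "r * x \<in> st F"
    using submodD(3)[OF Fbar_submod[OF semistarD(1)[OF ss fgF_Fbar[OF R F(1)]]] r F(3)] .
  then show ?thesis using F by (auto simp: sf_mem)
qed

lemma sf_submod:
  assumes R: "subring R" and ss: "semistar R st" and E: "E \<in> Fbar R"
  shows "submod R (star_f R st E)"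
  unfolding submod_def
  using sf_incl[OF R ss E] submodD(1)[OF Fbar_submod[OF E]] sf_add[OF R ss Fbar_submod[OF E]]
    sf_mul[OF R ss] by blast

lemma sf_idem:
  assumes R: "subring R" and ss: "semistar R st" and E: "submod R E"
  shows "star_f R st (star_f R st E) \<subseteq> star_f R st E"
proof
  fix x assume "x \<in> star_f R st (star_f R st E)"
  then obtain G where G: "G \<in> fgF R" "G \<subseteq> star_f R st E" "x \<in> st G" by (auto simp: sf_mem)
  obtain S where S: "finite S" "G = mod_gen R S" "G \<noteq> {0}" using G(1) by (rule fgF_obtain)
  have "\<forall>s\<in>S. \<exists>Ss. finite Ss \<and> mod_gen R Ss \<in> fgF R \<and> mod_gen R Ss \<subseteq> E \<and> s \<in> st (mod_gen R Ss)"
  proof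
    fix s assume "s \<in> S"
    then have "s \<in> star_f R st E" using G(2) S(2) mg_base[OF R] by blast
    then obtain F where F: "F \<in> fgF R" "F \<subseteq> E" "s \<in> st F" by (auto simp: sf_mem)
    obtain Ss where "finite Ss" "F = mod_gen R Ss" "F \<noteq> {0}" using F(1) by (rule fgF_obtain)
    then show "\<exists>Ss. finite Ss \<and> mod_gen R Ss \<in> fgF R \<and> mod_gen R Ss \<subseteq> E \<and> s \<in> st (mod_gen R Ss)"
      using F by blast
  qed
  then obtain f where f: "\<And>s. s \<in> S \<Longrightarrow> finite (f s) \<and> mod_gen R (f s) \<in> fgF R \<and> mod_gen R (f s) \<subseteq> E
      \<and> s \<in> st (mod_gen R (f s))" by metis
  define F where "F = mod_gen R (\<Union>s\<in>S. f s)"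
  have sub: "mod_gen R (f s) \<subseteq> F" if "s \<in> S" for s
    unfolding F_def using that by (intro mg_mono_set) auto
  have "S \<noteq> {}" using S mg_zero[OF R, of "{}"] submodD(1)[OF mg_submod[OF R, of "{}"]] by auto
  then obtain s0 where s0: "s0 \<in> S" by auto
  have FF: "F \<in> fgF R"
  proof -
    have "mod_gen R (f s0) \<noteq> {0}" using f[OF s0] unfolding fgF_def by auto
    then have "F \<noteq> {0}" using sub[OF s0] mg_submod[OF R, of "f s0"] submodD(1) by blast
    then show ?thesis unfolding F_def using S(1) f by (intro fgF_I) auto
  qed
  have FE: "F \<subseteq> E" unfolding F_def
  proof (rule mg_least[OF E])
    show "(\<Union>s\<in>S. f s) \<subseteq> E" using f mg_base[OF R] by blast
  qed
  have SF: "S \<subseteq> st F"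
  proof
    fix s assume s: "s \<in> S"
    have "st (mod_gen R (f s)) \<subseteq> st F"
      using semistarD(3)[OF ss fgF_Fbar[OF R] fgF_Fbar[OF R FF]] f[OF s] sub[OF s] by blast
    then show "s \<in> st F" using f[OF s] by blast
  qed
  have stF: "st F \<in> Fbar R" using semistarD(1)[OF ss fgF_Fbar[OF R FF]] .
  have "G \<subseteq> st F" unfolding S(2) by (rule mg_least[OF Fbar_submod[OF stF] SF])
  then have "st G \<subseteq> st (st F)" using semistarD(3)[OF ss fgF_Fbar[OF R G(1)] stF] by blast
  then have "x \<in> st F" using G(3) semistarD(5)[OF ss fgF_Fbar[OF R FF]] by blast
  then show "x \<in> star_f R st E" using FF FE by (auto simp: sf_mem)
qed

lemma sf_scale:
  assumes R: "subring R" and ss: "semistar R st" and x: "x \<noteq> 0"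
  shows "(*) x ` star_f R st E \<subseteq> star_f R st ((*) x ` E)"
proof
  fix y assume "y \<in> (*) x ` star_f R st E"
  then obtain z where z: "z \<in> star_f R st E" "y = x * z" by auto
  obtain F where F: "F \<in> fgF R" "F \<subseteq> E" "z \<in> st F" using z(1) by (auto simp: sf_mem)
  obtain S where S: "finite S" "F = mod_gen R S" "F \<noteq> {0}" using F(1) by (rule fgF_obtain)
  have eq: "(*) x ` F = mod_gen R ((*) x ` S)" using mg_scale[OF R x] S(2) by simp
  have "(*) x ` F \<noteq> {0}"
  proof -
    have "0 \<in> F" using S(2) submodD(1)[OF mg_submod[OF R]] by simp
    then obtain f where "f \<in> F" "f \<noteq> 0" using S(3) by blast
    then have "x * f \<in> (*) x ` F" "x * f \<noteq> 0" using x by auto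
    then show ?thesis by blast
  qed
  then have xF: "(*) x ` F \<in> fgF R" unfolding eq using S(1) by (intro fgF_I) (auto simp: eq[symmetric])
  have "st ((*) x ` F) = (*) x ` st F" using semistarD(2)[OF ss fgF_Fbar[OF R F(1)] x] .
  then have "y \<in> st ((*) x ` F)" using z F by auto
  then show "y \<in> star_f R st ((*) x ` E)" using xF F(2) by (auto simp: sf_mem)
qed

lemma ideal_one: "ideal_of R I \<Longrightarrow> 1 \<in> I \<Longrightarrow> I = R"
  unfolding ideal_of_def submod_def by (metis mult.right_neutral subsetI subset_antisym)

lemma ideal_plus:
  assumes R: "subring R" and M: "ideal_of R M" and d: "d \<in> R"
  shows "ideal_of R {m + d * r | m r. m \<in> M \<and> r \<in> R}"
    "M \<subseteq> {m + d * r | m r. m \<in> M \<and> r \<in> R}" "d \<in> {m + d * r | m r. m \<in> M \<and> r \<in> R}"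
proof -
  let ?I = "{m + d * r | m r. m \<in> M \<and> r \<in> R}"
  note sr = subringD[OF R]
  have MR: "M \<subseteq> R" "submod R M" using M unfolding ideal_of_def by auto
  note sm = submodD[OF MR(2)]
  show "M \<subseteq> ?I"
  proof
    fix m assume "m \<in> M" then show "m \<in> ?I" using sr(1) by (intro CollectI exI[of _ m] exI[of _ 0]) auto
  qed
  show "d \<in> ?I" using sr(2) sm(1) by (intro CollectI exI[of _ 0] exI[of _ 1]) auto
  have "?I \<subseteq> R" using MR sr d by auto
  moreover have "submod R ?I"
    unfolding submod_def
  proof (intro conjI ballI)
    show "0 \<in> ?I" using sr(1) sm(1) by (intro CollectI exI[of _ 0] exI[of _ 0]) auto
    fix x y assume "x \<in> ?I" "y \<in> ?I"
    then obtain m1 r1 m2 r2 where "x = m1 + d * r1" "y = m2 + d * r2" "m1 \<in> M" "r1 \<in> R" "m2 \<in> M" "r2 \<in> R"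
      by auto
    then show "x + y \<in> ?I" using sm sr
      by (intro CollectI exI[of _ "m1+m2"] exI[of _ "r1+r2"]) (auto simp: algebra_simps)
  next
    fix r x assume "r \<in> R" "x \<in> ?I"
    then obtain m1 r1 where "x = m1 + d * r1" "m1 \<in> M" "r1 \<in> R" by auto
    moreover have "r * x = r * m1 + d * (r * r1)" using \<open>x = m1 + d * r1\<close> by (simp add: algebra_simps)
    ultimately show "r * x \<in> ?I" using sm(3)[OF \<open>r \<in> R\<close> \<open>m1 \<in> M\<close>] sr(5)[OF \<open>r \<in> R\<close> \<open>r1 \<in> R\<close>] by blast
  qed
  ultimately show "ideal_of R ?I" unfolding ideal_of_def by blast
qed



lemma zorn_quasi:
  assumes R: "subring R" and ss: "semistar R st" and J: "ideal_of R J" "J \<noteq> {0}"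
    and one: "1 \<notin> star_f R st J"
  shows "\<exists>M. quasi_max R (star_f R st) M \<and> quasi_prime R (star_f R st) M \<and> J \<subseteq> M"
proof -
  define A where "A = {I. ideal_of R I \<and> J \<subseteq> I \<and> 1 \<notin> star_f R st I}"
  have "\<forall>C\<in>chains A. \<exists>U\<in>A. \<forall>X\<in>C. X \<subseteq> U"
  proof
    fix C assume C: "C \<in> chains A"
    show "\<exists>U\<in>A. \<forall>X\<in>C. X \<subseteq> U"
    proof (cases "C = {}")
      case True then show ?thesis using J one unfolding A_def by auto
    next
      case False
      have CA: "C \<subseteq> A" using C chainsD2 by blast
      have ch: "\<And>X Y. X\<in>C \<Longrightarrow> Y\<in>C \<Longrightarrow> X \<subseteq> Y \<or> Y \<subseteq> X" using C chainsD by blast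
      have idC: "\<And>X. X \<in> C \<Longrightarrow> ideal_of R X" using CA unfolding A_def by auto
      have id: "ideal_of R (\<Union>C)"
        unfolding ideal_of_def submod_def
      proof (intro conjI ballI)
        show "\<Union>C \<subseteq> R" using idC unfolding ideal_of_def by auto
        obtain X where "X \<in> C" using False by auto
        then show "0 \<in> \<Union>C" using idC[of X] unfolding ideal_of_def submod_def by auto
      next
        fix x y assume "x \<in> \<Union>C" "y \<in> \<Union>C"
        then obtain X Y where XY: "X\<in>C" "Y\<in>C" "x\<in>X" "y\<in>Y" by auto
        then obtain Z where Z: "Z \<in> C" "x \<in> Z" "y \<in> Z" using ch[of X Y] by blast
        then have "x + y \<in> Z" using idC[of Z] unfolding ideal_of_def submod_def by blast
        then show "x+y \<in> \<Union>C" using Z by blast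
      next
        fix r x assume "r\<in>R" "x\<in>\<Union>C"
        then show "r*x \<in> \<Union>C" using idC unfolding ideal_of_def submod_def by blast
      qed
      have JC: "J \<subseteq> \<Union>C" using False CA unfolding A_def by auto
      have nC: "1 \<notin> star_f R st (\<Union>C)"
      proof
        assume "1 \<in> star_f R st (\<Union>C)"
        then obtain F where F: "F \<in> fgF R" "F \<subseteq> \<Union>C" "1 \<in> st F" by (auto simp: sf_mem)
        obtain S where S: "finite S" "F = mod_gen R S" "F \<noteq> {0}" using F(1) by (rule fgF_obtain)
        have "S \<subseteq> \<Union>C" using F(2) S(2) mg_base[OF R] by blast
        moreover have "subset.chain A C" using C by (simp add: chains_alt_def)
        ultimately obtain B where B: "B \<in> C" "S \<subseteq> B"
          using finite_subset_Union_chain[OF S(1) _ False] by blast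
        have "F \<subseteq> B" unfolding S(2) by (rule mg_least) (use idC[OF B(1)] B(2) in \<open>auto simp: ideal_of_def\<close>)
        then have "1 \<in> star_f R st B" using sf_fg[OF F(1)] F(3) by blast
        then show False using CA B(1) unfolding A_def by auto
      qed
      show ?thesis using id JC nC unfolding A_def by blast
    qed
  qed
  then obtain M where MA: "M \<in> A" and max: "\<forall>X\<in>A. M \<subseteq> X \<longrightarrow> X = M"
    using Zorn_Lemma2[of A] by blast
  have Mid: "ideal_of R M" and JM: "J \<subseteq> M" and M1: "1 \<notin> star_f R st M"
    using MA unfolding A_def by auto
  have MR: "M \<subseteq> R" "submod R M" using Mid unfolding ideal_of_def by auto
  have Mnz: "M \<noteq> {0}"
  proof
    assume "M = {0}"
    then have "J \<subseteq> {0}" using JM by simp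
    moreover have "0 \<in> J" using J(1) unfolding ideal_of_def submod_def by blast
    ultimately show False using J(2) by blast
  qed
  have MF: "M \<in> Fbar R" using MR Mnz unfolding Fbar_def by auto
  have Minc: "M \<subseteq> star_f R st M" using sf_incl[OF R ss MF] .
  have bigger: "1 \<in> star_f R st I" if "ideal_of R I" "M \<subseteq> I" "I \<noteq> M" for I
    using max that JM unfolding A_def by blast
  have closed: "d \<in> M" if d: "d \<in> star_f R st M" "d \<in> R" for d
  proof -
    let ?I = "{m + d * r | m r. m \<in> M \<and> r \<in> R}"
    note ip = ideal_plus[OF R Mid d(2)]
    have "?I \<subseteq> star_f R st M"
    proof
      fix z assume "z \<in> ?I"
      then obtain m r where z: "z = m + d * r" "m \<in> M" "r \<in> R" by blast
      have "r * d \<in> star_f R st M" using sf_mul[OF R ss z(3) d(1)] .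
      then show "z \<in> star_f R st M"
        using sf_add[OF R ss MR(2), of m "d*r"] Minc z by (auto simp: mult.commute)
    qed
    then have "star_f R st ?I \<subseteq> star_f R st M"
      using sf_mono[of ?I "star_f R st M" R st] sf_idem[OF R ss MR(2)] by blast
    then have "?I = M" using bigger[OF ip(1) ip(2)] M1 by blast
    then show ?thesis using ip(3) by simp
  qed
  have qi: "quasi_ideal R (star_f R st) M"
    unfolding quasi_ideal_def using Mid Mnz closed Minc MR(1) by blast
  have MnR: "M \<noteq> R" using M1 Minc subringD(2)[OF R] by blast
  have prime: "a \<in> M \<or> b \<in> M" if ab: "a \<in> R" "b \<in> R" "a * b \<in> M" for a b
  proof (rule ccontr)
    assume nab: "\<not> (a \<in> M \<or> b \<in> M)"
    let ?I = "{m + a * r | m r. m \<in> M \<and> r \<in> R}"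
    note ip = ideal_plus[OF R Mid ab(1)]
    have "?I \<noteq> M" using ip(3) nab by blast
    then have one: "1 \<in> star_f R st ?I" using bigger ip by blast
    have b0: "b \<noteq> 0" using nab submodD(1)[OF MR(2)] by auto
    have "(*) b ` ?I \<subseteq> M"
    proof
      fix z assume "z \<in> (*) b ` ?I"
      then obtain m r where z: "z = b * (m + a * r)" "m \<in> M" "r \<in> R" by blast
      have "z = b * m + r * (a * b)" using z(1) by (simp add: algebra_simps)
      then show "z \<in> M" using submodD[OF MR(2)] z ab by simp
    qed
    then have "(*) b ` star_f R st ?I \<subseteq> star_f R st M"
      using sf_scale[OF R ss b0, of ?I] sf_mono[of "(*) b ` ?I" M R st] by blast
    then have "b \<in> star_f R st M" using one by force
    then show False using closed ab(2) nab by blast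
  qed
  have qp: "quasi_prime R (star_f R st) M"
    unfolding quasi_prime_def using qi MnR prime by blast
  have qm: "quasi_max R (star_f R st) M"
    unfolding quasi_max_def
  proof (intro conjI allI impI qi MnR)
    fix I assume I: "quasi_ideal R (star_f R st) I \<and> I \<noteq> R \<and> M \<subseteq> I"
    have "1 \<notin> star_f R st I"
    proof
      assume "1 \<in> star_f R st I"
      then have "1 \<in> I" using I subringD(2)[OF R] unfolding quasi_ideal_def by blast
      then show False using I ideal_one unfolding quasi_ideal_def by blast
    qed
    then have "I \<in> A" using I JM unfolding A_def quasi_ideal_def by blast
    then show "I = M" using max I by blast
  qed
  show ?thesis using qm qp JM by blast
qed

lemma qmax_prime:
  assumes R: "subring R" and ss: "semistar R st" and Q: "quasi_max R (star_f R st) Q"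
  shows "quasi_prime R (star_f R st) Q"
proof -
  have qi: "quasi_ideal R (star_f R st) Q" "Q \<noteq> R" using Q unfolding quasi_max_def by auto
  have "1 \<notin> star_f R st Q"
  proof
    assume "1 \<in> star_f R st Q"
    then have "1 \<in> Q" using qi subringD(2)[OF R] unfolding quasi_ideal_def by blast
    then show False using qi ideal_one unfolding quasi_ideal_def by blast
  qed
  then obtain M where M: "quasi_max R (star_f R st) M" "quasi_prime R (star_f R st) M" "Q \<subseteq> M"
    using zorn_quasi[OF R ss] qi unfolding quasi_ideal_def by blast
  have "M = Q" using Q M unfolding quasi_max_def by blast
  then show ?thesis using M by simp
qed



lemma loc_mem: "0 \<notin> S \<Longrightarrow> y \<in> loc E S \<longleftrightarrow> (\<exists>s\<in>S. y * s \<in> E)"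
  unfolding loc_def
proof (intro iffI)
  assume "0 \<notin> S" "y \<in> {e / s |e s. e \<in> E \<and> s \<in> S}"
  then obtain e s where "y = e / s" "e \<in> E" "s \<in> S" "s \<noteq> 0" by auto
  then show "\<exists>s\<in>S. y * s \<in> E" by (intro bexI[of _ s]) auto
next
  assume "0 \<notin> S" "\<exists>s\<in>S. y * s \<in> E"
  then obtain s where "s \<in> S" "y * s \<in> E" "s \<noteq> 0" by auto
  then have "y = (y * s) / s" by simp
  then show "y \<in> {e / s |e s. e \<in> E \<and> s \<in> S}" using \<open>s \<in> S\<close> \<open>y * s \<in> E\<close> by blast
qed

lemma qi_facts:
  assumes R: "subring R" and q: "quasi_ideal R sf I" "I \<noteq> R"
  shows "0 \<in> I" "I \<subseteq> R" "1 \<notin> I" "submod R I" "I \<in> Fbar R" "sf I \<inter> R = I"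
proof -
  have id: "ideal_of R I" "I \<noteq> {0}" "sf I \<inter> R = I" using q unfolding quasi_ideal_def by auto
  then show "0 \<in> I" "I \<subseteq> R" "submod R I" "sf I \<inter> R = I" unfolding ideal_of_def submod_def by auto
  then show "I \<in> Fbar R" using id unfolding Fbar_def by auto
  show "1 \<notin> I" using ideal_one[OF id(1)] q(2) by blast
qed

lemma qp_mult:
  assumes "quasi_prime R sf P" "s1 \<in> R - P" "s2 \<in> R - P" "subring R"
  shows "s1 * s2 \<in> R - P"
  using assms subringD(5)[OF assms(4)] unfolding quasi_prime_def by blast

lemma ell_mem: "y \<in> ell D st E \<longleftrightarrow> (\<forall>P. quasi_prime D (star_f D st) P \<longrightarrow> (\<exists>s\<in>D-P. y * s \<in> E))"
proof -
  have z: "0 \<notin> D - P" if "quasi_prime D (star_f D st) P" for P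
    using that unfolding quasi_prime_def quasi_ideal_def ideal_of_def submod_def by auto
  moreover have "y \<in> ell D st E \<longleftrightarrow> (\<forall>P. quasi_prime D (star_f D st) P \<longrightarrow> y \<in> loc E (D - P))"
    unfolding ell_def by blast
  moreover have "\<forall>P. quasi_prime D (star_f D st) P \<longrightarrow> (y \<in> loc E (D - P) \<longleftrightarrow> (\<exists>s\<in>D - P. y * s \<in> E))"
    using loc_mem z by blast
  ultimately show ?thesis by simp
qed

lemma tilde_mem: "y \<in> tilde R st E \<longleftrightarrow> (\<forall>Q. quasi_max R (star_f R st) Q \<longrightarrow> (\<exists>s\<in>R-Q. y * s \<in> E))"
proof -
  have z: "0 \<notin> R - Q" if "quasi_max R (star_f R st) Q" for Q
    using that unfolding quasi_max_def quasi_ideal_def ideal_of_def submod_def by auto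
  moreover have "y \<in> tilde R st E \<longleftrightarrow> (\<forall>Q. quasi_max R (star_f R st) Q \<longrightarrow> y \<in> loc E (R - Q))"
    unfolding tilde_def by blast
  moreover have "\<forall>Q. quasi_max R (star_f R st) Q \<longrightarrow> (y \<in> loc E (R - Q) \<longleftrightarrow> (\<exists>s\<in>R - Q. y * s \<in> E))"
    using loc_mem z by blast
  ultimately show ?thesis by simp
qed

lemma nzmult:
  assumes Q: "is_quotient_field_of D" and DR: "D \<subseteq> R" and E: "submod R E"
    and e: "e \<in> E" "e \<noteq> 0" and x: "x \<noteq> 0"
  shows "\<exists>a\<in>D. a \<noteq> 0 \<and> a * x \<in> E"
proof -
  obtain a b where ab: "a \<in> D" "b \<in> D" "b \<noteq> 0" "e / x = a / b"
    using Q unfolding is_quotient_field_of_def by blast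
  have "a * x = b * e" using ab(3,4) x by (simp add: field_simps)
  moreover have "b * e \<in> E" using submodD(3)[OF E _ e(1)] ab(2) DR by blast
  moreover have "a \<noteq> 0" using \<open>a * x = b * e\<close> ab(3) e(2) by auto
  ultimately show ?thesis using ab(1) by auto
qed

lemma img_iff:
  assumes x: "(x::'a::field) \<noteq> 0"
  shows "y \<in> (\<lambda>e. x * e) ` A \<longleftrightarrow> y / x \<in> A"
proof
  assume "y \<in> (\<lambda>e. x * e) ` A"
  then obtain a where "a \<in> A" "y = x * a" by blast
  then show "y / x \<in> A" using x by simp
next
  assume "y / x \<in> A"
  moreover have "y = x * (y / x)" using x by simp
  ultimately show "y \<in> (\<lambda>e. x * e) ` A" by blast
qed

lemma one_full:
  assumes R: "subring R" and ss: "semistar R s" and G: "G \<in> Fbar R" "G \<subseteq> R" and one: "1 \<in> s G"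
  shows "s G = s R"
proof
  show "s G \<subseteq> s R" using semistarD(3)[OF ss G(1) R_Fbar[OF R]] G(2) by blast
  have sG: "s G \<in> Fbar R" using semistarD(1)[OF ss G(1)] .
  have "R \<subseteq> s G"
  proof
    fix r assume "r \<in> R"
    then have "r * 1 \<in> s G" using submodD(3)[OF Fbar_submod[OF sG] _ one] by blast
    then show "r \<in> s G" by simp
  qed
  then have "s R \<subseteq> s (s G)" using semistarD(3)[OF ss R_Fbar[OF R] sG] by blast
  then show "s R \<subseteq> s G" using semistarD(5)[OF ss G(1)] by simp
qed

lemma fg_extend:
  assumes D: "subring D" and T: "subring T" and DT: "D \<subseteq> T" and F: "F \<in> fgF D"
  shows "mod_gen T F \<in> fgF T" "F \<subseteq> mod_gen T F"
proof -
  obtain S where S: "finite S" "F = mod_gen D S" "F \<noteq> {0}" using F by (rule fgF_obtain)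
  show sub: "F \<subseteq> mod_gen T F" using mg_base[OF T] by blast
  have eq: "mod_gen T F = mod_gen T S" using mg_two_rings[OF D T DT] S(2) by simp
  have "0 \<in> F" using S(2) submodD(1)[OF mg_submod[OF D]] by simp
  then have "mod_gen T F \<noteq> {0}" using sub S(3) by blast
  then show "mod_gen T F \<in> fgF T" unfolding eq using S(1) by (intro fgF_I) (auto simp: eq)
qed

lemma not_sub_quasi:
  assumes R: "subring R" and ss: "semistar R st" and F: "F \<in> fgF R" "st F = st R"
    and P: "quasi_ideal R (star_f R st) P" "P \<noteq> R"
  shows "\<not> F \<subseteq> P"
proof
  assume "F \<subseteq> P"
  then have "st F \<subseteq> star_f R st P" using sf_fg[OF F(1)] by blast
  moreover have "1 \<in> st R" using semistarD(4)[OF ss R_Fbar[OF R]] subringD(2)[OF R] by blast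
  ultimately have "1 \<in> P" using F(2) qi_facts(6)[OF R P] subringD(2)[OF R] by blast
  then show False using qi_facts(3)[OF R P] by blast
qed


context
  fixes D T :: "'a::field set" and st :: "'a set \<Rightarrow> 'a set"
  assumes D: "subring D" and Q: "is_quotient_field_of D" and T: "subring T" and DT: "D \<subseteq> T"
    and ss: "semistar D st"
begin

lemma ell_incl: "E \<subseteq> ell D st E"
proof
  fix y assume "y \<in> E"
  show "y \<in> ell D st E" unfolding ell_mem
  proof (intro allI impI)
    fix P assume "quasi_prime D (star_f D st) P"
    then have "1 \<in> D - P" using qi_facts(3)[OF D] subringD(2)[OF D] unfolding quasi_prime_def by blast
    then show "\<exists>s\<in>D - P. y * s \<in> E" using \<open>y \<in> E\<close> by (intro bexI[of _ 1]) auto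
  qed
qed

lemma ell_memD: "y \<in> ell D st E \<Longrightarrow> quasi_prime D (star_f D st) P \<Longrightarrow> \<exists>s\<in>D-P. y * s \<in> E"
  using ell_mem by blast

lemma ell_mono: "E \<subseteq> F \<Longrightarrow> ell D st E \<subseteq> ell D st F"
proof
  fix y assume "E \<subseteq> F" "y \<in> ell D st E"
  then show "y \<in> ell D st F" unfolding ell_mem by blast
qed

lemma ell_idem: "ell D st (ell D st E) \<subseteq> ell D st E"
proof
  fix y assume y: "y \<in> ell D st (ell D st E)"
  show "y \<in> ell D st E" unfolding ell_mem
  proof (intro allI impI)
    fix P assume P: "quasi_prime D (star_f D st) P"
    obtain s where s: "s \<in> D - P" "y * s \<in> ell D st E" using ell_memD[OF _ P] y by blast
    obtain s' where s': "s' \<in> D - P" "y * s * s' \<in> E" using ell_memD[OF s(2) P] by blast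
    show "\<exists>s\<in>D - P. y * s \<in> E"
      using qp_mult[OF P s(1) s'(1) D] s'(2) by (intro bexI[of _ "s*s'"]) (auto simp: mult.assoc)
  qed
qed

lemma ell_inter:
  assumes E: "submod T E" and F: "submod T F"
  shows "ell D st (E \<inter> F) = ell D st E \<inter> ell D st F"
proof
  show "ell D st (E \<inter> F) \<subseteq> ell D st E \<inter> ell D st F" using ell_mono by blast
  show "ell D st E \<inter> ell D st F \<subseteq> ell D st (E \<inter> F)"
  proof
    fix y assume y: "y \<in> ell D st E \<inter> ell D st F"
    show "y \<in> ell D st (E \<inter> F)" unfolding ell_mem
    proof (intro allI impI)
      fix P assume P: "quasi_prime D (star_f D st) P"
      obtain s1 where s1: "s1 \<in> D - P" "y * s1 \<in> E" using ell_memD[OF _ P] y by blast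
      obtain s2 where s2: "s2 \<in> D - P" "y * s2 \<in> F" using ell_memD[OF _ P] y by blast
      have "s2 * (y * s1) \<in> E" using submodD(3)[OF E _ s1(2)] s2(1) DT by blast
      moreover have "s1 * (y * s2) \<in> F" using submodD(3)[OF F _ s2(2)] s1(1) DT by blast
      ultimately have "y * (s1 * s2) \<in> E \<inter> F" by (simp add: algebra_simps)
      then show "\<exists>s\<in>D - P. y * s \<in> E \<inter> F" using qp_mult[OF P s1(1) s2(1) D] by blast
    qed
  qed
qed

lemma ell_submod:
  assumes E: "submod T E"
  shows "submod T (ell D st E)"
  unfolding submod_def
proof (intro conjI ballI)
  show "0 \<in> ell D st E" using ell_incl submodD(1)[OF E] by blast
  fix x y assume x: "x \<in> ell D st E" and y: "y \<in> ell D st E"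
  show "x + y \<in> ell D st E" unfolding ell_mem
  proof (intro allI impI)
    fix P assume P: "quasi_prime D (star_f D st) P"
    obtain s1 where s1: "s1 \<in> D - P" "x * s1 \<in> E" using ell_memD[OF x P] by blast
    obtain s2 where s2: "s2 \<in> D - P" "y * s2 \<in> E" using ell_memD[OF _ P] y by blast
    have "s2 * (x * s1) \<in> E" using submodD(3)[OF E _ s1(2)] s2(1) DT by blast
    moreover have "s1 * (y * s2) \<in> E" using submodD(3)[OF E _ s2(2)] s1(1) DT by blast
    ultimately have "(x + y) * (s1 * s2) \<in> E" using submodD(2)[OF E] by (simp add: algebra_simps)
    then show "\<exists>s\<in>D - P. (x + y) * s \<in> E" using qp_mult[OF P s1(1) s2(1) D] by blast
  qed
next
  fix r x assume r: "r \<in> T" and x: "x \<in> ell D st E"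
  show "r * x \<in> ell D st E" unfolding ell_mem
  proof (intro allI impI)
    fix P assume P: "quasi_prime D (star_f D st) P"
    obtain s where s: "s \<in> D - P" "x * s \<in> E" using ell_memD[OF x P] by blast
    have "r * (x * s) \<in> E" using submodD(3)[OF E r s(2)] .
    then show "\<exists>s\<in>D - P. r * x * s \<in> E" using s(1) by (auto simp: mult.assoc)
  qed
qed

lemma ell_scale:
  assumes x: "x \<noteq> 0"
  shows "ell D st ((\<lambda>e. x * e) ` E) = (\<lambda>e. x * e) ` ell D st E"
proof (rule set_eqI)
  fix y
  have "y \<in> ell D st ((\<lambda>e. x * e) ` E) \<longleftrightarrow> y / x \<in> ell D st E"
  proof -
    have "\<And>s. (y * s \<in> (\<lambda>e. x * e) ` E) \<longleftrightarrow> (y / x * s \<in> E)"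
      using img_iff[OF x] by (metis times_divide_eq_left)
    then show ?thesis unfolding ell_mem by simp
  qed
  then show "y \<in> ell D st ((\<lambda>e. x * e) ` E) \<longleftrightarrow> y \<in> (\<lambda>e. x * e) ` ell D st E"
    using img_iff[OF x] by blast
qed

lemma part1: "semistar T (ell D st) \<and> stable T (ell D st)"
proof
  show "semistar T (ell D st)" unfolding semistar_def
  proof (intro ballI)
    fix E assume E: "E \<in> Fbar T"
    have "ell D st E \<noteq> {0}" using ell_incl[of E] E unfolding Fbar_def submod_def by auto
    then have 1: "ell D st E \<in> Fbar T" using ell_submod[OF Fbar_submod[OF E]] unfolding Fbar_def by auto
    have 2: "E \<subseteq> ell D st E" by (rule ell_incl)
    have 3: "ell D st (ell D st E) = ell D st E" using ell_idem ell_incl by blast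
    have 4: "\<forall>x. x \<noteq> 0 \<longrightarrow> ell D st ((\<lambda>e. x * e) ` E) = (\<lambda>e. x * e) ` ell D st E"
      using ell_scale by blast
    have 5: "\<forall>F\<in>Fbar T. E \<subseteq> F \<longrightarrow> ell D st E \<subseteq> ell D st F" using ell_mono by blast
    show "ell D st E \<in> Fbar T \<and>
         (\<forall>x. x \<noteq> 0 \<longrightarrow> ell D st ((\<lambda>e. x * e) ` E) = (\<lambda>e. x * e) ` ell D st E) \<and>
         (\<forall>F\<in>Fbar T. E \<subseteq> F \<longrightarrow> ell D st E \<subseteq> ell D st F) \<and>
         E \<subseteq> ell D st E \<and> ell D st (ell D st E) = ell D st E"
      using 1 2 3 4 5 by blast
  qed
  show "stable T (ell D st)" unfolding stable_def using ell_inter Fbar_submod by blast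
qed

end



lemma tilde_memD: "y \<in> tilde R st E \<Longrightarrow> quasi_max R (star_f R st) Q \<Longrightarrow> \<exists>s\<in>R-Q. y * s \<in> E"
  using tilde_mem by blast

lemma tilde_mono: "E \<subseteq> F \<Longrightarrow> tilde R st E \<subseteq> tilde R st F"
proof
  fix y assume "E \<subseteq> F" "y \<in> tilde R st E"
  then show "y \<in> tilde R st F" unfolding tilde_mem by blast
qed

lemma R_submod: "subring R \<Longrightarrow> submod R R"
  using R_Fbar Fbar_submod by blast

lemma colon_ideal:
  assumes R: "subring R" and RT: "R \<subseteq> T" and E: "submod T E"
  shows "ideal_of R {t \<in> R. t * y \<in> E}"
  unfolding ideal_of_def submod_def
proof (intro conjI ballI)
  show "{t \<in> R. t * y \<in> E} \<subseteq> R" by blast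
  show "0 \<in> {t \<in> R. t * y \<in> E}" using subringD(1)[OF R] submodD(1)[OF E] by simp
  fix a b assume a: "a \<in> {t \<in> R. t * y \<in> E}" and b: "b \<in> {t \<in> R. t * y \<in> E}"
  have "(a + b) * y = a * y + b * y" by (simp add: distrib_right)
  then show "a + b \<in> {t \<in> R. t * y \<in> E}" using a b subringD(3)[OF R] submodD(2)[OF E] by auto
next
  fix r a assume r: "r \<in> R" and a: "a \<in> {t \<in> R. t * y \<in> E}"
  have "(r * a) * y = r * (a * y)" by (simp add: mult.assoc)
  moreover have "r * (a * y) \<in> E" using submodD(3)[OF E] r a RT by blast
  ultimately show "r * a \<in> {t \<in> R. t * y \<in> E}" using r a subringD(5)[OF R] by (simp add: mult.assoc)
qed

lemma inter_ideal:
  assumes D: "subring D" and DT: "D \<subseteq> T" and Q: "submod T Q"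
  shows "ideal_of D (Q \<inter> D)"
  unfolding ideal_of_def submod_def
proof (intro conjI ballI)
  show "Q \<inter> D \<subseteq> D" by blast
  show "0 \<in> Q \<inter> D" using subringD(1)[OF D] submodD(1)[OF Q] by simp
  fix a b assume "a \<in> Q \<inter> D" "b \<in> Q \<inter> D"
  then show "a + b \<in> Q \<inter> D" using subringD(3)[OF D] submodD(2)[OF Q] by auto
next
  fix r a assume "r \<in> D" "a \<in> Q \<inter> D"
  then show "r * a \<in> Q \<inter> D" using subringD(5)[OF D] submodD(3)[OF Q] DT by auto
qed

context
  fixes D T :: "'a::field set" and st :: "'a set \<Rightarrow> 'a set"
  assumes D: "subring D" and Q: "is_quotient_field_of D" and T: "subring T" and DT: "D \<subseteq> T"
    and ss: "semistar D st"
begin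

lemma part3a: "linked D T st (ell D st)"
  unfolding linked_def
proof (intro allI impI)
  fix F assume F: "F \<in> fgF D \<and> F \<subseteq> D \<and> st F = st D"
  have GT: "mod_gen T F \<subseteq> T" by (rule mg_least[OF R_submod[OF T]]) (use F DT in blast)
  show "ell D st (mod_gen T F) = ell D st T"
  proof
    show "ell D st (mod_gen T F) \<subseteq> ell D st T" using ell_mono[OF D Q T DT ss GT] .
    show "ell D st T \<subseteq> ell D st (mod_gen T F)"
    proof
      fix y assume y: "y \<in> ell D st T"
      show "y \<in> ell D st (mod_gen T F)" unfolding ell_mem
      proof (intro allI impI)
        fix P assume P: "quasi_prime D (star_f D st) P"
        have Pq: "quasi_ideal D (star_f D st) P" "P \<noteq> D" using P unfolding quasi_prime_def by auto
        obtain s where s: "s \<in> D - P" "y * s \<in> T" using ell_memD[OF D Q T DT ss y P] by blast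
        obtain f where f: "f \<in> F" "f \<notin> P" using not_sub_quasi[OF D ss _ _ Pq] F by blast
        have fD: "f \<in> D - P" using f F by blast
        have "(y * s) * f \<in> mod_gen T F"
          using submodD(3)[OF mg_submod[OF T] _ mg_base[OF T f(1)]] s(2) DT by blast
        then show "\<exists>s\<in>D - P. y * s \<in> mod_gen T F"
          using qp_mult[OF P s(1) fD D] by (intro bexI[of _ "s*f"]) (auto simp: mult.assoc)
      qed
    qed
  qed
qed

lemma part3b: "linked D D st (tilde D st)"
  unfolding linked_def
proof (intro allI impI)
  fix F assume F: "F \<in> fgF D \<and> F \<subseteq> D \<and> st F = st D"
  have GT: "mod_gen D F \<subseteq> D" by (rule mg_least[OF R_submod[OF D]]) (use F in blast)
  show "tilde D st (mod_gen D F) = tilde D st D"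
  proof
    show "tilde D st (mod_gen D F) \<subseteq> tilde D st D" using tilde_mono[OF GT] .
    show "tilde D st D \<subseteq> tilde D st (mod_gen D F)"
    proof
      fix y assume y: "y \<in> tilde D st D"
      show "y \<in> tilde D st (mod_gen D F)" unfolding tilde_mem
      proof (intro allI impI)
        fix P assume P0: "quasi_max D (star_f D st) P"
        have P: "quasi_prime D (star_f D st) P" using qmax_prime[OF D ss P0] .
        have Pq: "quasi_ideal D (star_f D st) P" "P \<noteq> D" using P unfolding quasi_prime_def by auto
        obtain s where s: "s \<in> D - P" "y * s \<in> D" using tilde_memD[OF y P0] by blast
        obtain f where f: "f \<in> F" "f \<notin> P" using not_sub_quasi[OF D ss _ _ Pq] F by blast
        have fD: "f \<in> D - P" using f F by blast
        have "(y * s) * f \<in> mod_gen D F"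
          using submodD(3)[OF mg_submod[OF D] _ mg_base[OF D f(1)]] s(2) by blast
        then show "\<exists>s\<in>D - P. y * s \<in> mod_gen D F"
          using qp_mult[OF P s(1) fD D] by (intro bexI[of _ "s*f"]) (auto simp: mult.assoc)
      qed
    qed
  qed
qed

lemma tilde_le_sf:
  assumes s: "semistar T s" and E: "E \<in> Fbar T"
  shows "tilde T s E \<subseteq> star_f T s E"
proof
  fix y assume y: "y \<in> tilde T s E"
  show "y \<in> star_f T s E"
  proof (cases "y = 0")
    case True
    then show ?thesis using sf_incl[OF T s E] submodD(1)[OF Fbar_submod[OF E]] by blast
  next
    case False
    define J where "J = {t \<in> T. t * y \<in> E}"
    have ES: "submod T E" using Fbar_submod[OF E] .
    have Jid: "ideal_of T J" unfolding J_def using colon_ideal[OF T _ ES] by blast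
    obtain e where e: "e \<in> E" "e \<noteq> 0" using E unfolding Fbar_def submod_def by auto
    obtain a where a: "a \<in> D" "a \<noteq> 0" "a * y \<in> E" using nzmult[OF Q DT ES e False] by blast
    have Jnz: "J \<noteq> {0}" using a DT unfolding J_def by auto
    show ?thesis
    proof (cases "1 \<in> star_f T s J")
      case True
      then obtain G where G: "G \<in> fgF T" "G \<subseteq> J" "1 \<in> s G" by (auto simp: sf_mem)
      obtain S where S: "finite S" "G = mod_gen T S" "G \<noteq> {0}" using G(1) by (rule fgF_obtain)
      have eq: "(*) y ` G = mod_gen T ((*) y ` S)" using mg_scale[OF T False] S(2) by simp
      have "(*) y ` G \<noteq> {0}"
      proof -
        have "0 \<in> G" using S(2) submodD(1)[OF mg_submod[OF T]] by simp
        then obtain g where "g \<in> G" "g \<noteq> 0" using S(3) by blast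
        then have "y * g \<in> (*) y ` G" "y * g \<noteq> 0" using False by auto
        then show ?thesis by blast
      qed
      then have H: "(*) y ` G \<in> fgF T" unfolding eq using S(1) by (intro fgF_I) (auto simp: eq[symmetric])
      have HE: "(*) y ` G \<subseteq> E" using G(2) unfolding J_def by (auto simp: mult.commute)
      have "s ((*) y ` G) = (*) y ` s G" using semistarD(2)[OF s fgF_Fbar[OF T G(1)] False] .
      then have "y \<in> s ((*) y ` G)" using G(3) by force
      then show ?thesis using H HE by (auto simp: sf_mem)
    next
      case False
      then obtain M where M: "quasi_max T (star_f T s) M" "J \<subseteq> M"
        using zorn_quasi[OF T s Jid Jnz] by blast
      obtain t where t: "t \<in> T - M" "y * t \<in> E" using tilde_memD[OF y M(1)] by blast
      then have "t \<in> J" unfolding J_def by (auto simp: mult.commute)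
      then show ?thesis using t M(2) by blast
    qed
  qed
qed

lemma part2a:
  assumes s': "semistar T st'" and lk: "linked D T st st'"
  shows "sle T (ell D st) (tilde T st')"
  unfolding sle_def
proof (intro ballI subsetI)
  fix E y assume E: "E \<in> Fbar T" and y: "y \<in> ell D st E"
  show "y \<in> tilde T st' E" unfolding tilde_mem
  proof (intro allI impI)
    fix Q0 assume Q0: "quasi_max T (star_f T st') Q0"
    have Qq: "quasi_ideal T (star_f T st') Q0" "Q0 \<noteq> T" using Q0 unfolding quasi_max_def by auto
    note qf = qi_facts[OF T Qq]
    define P0 where "P0 = Q0 \<inter> D"
    have P0id: "ideal_of D P0" unfolding P0_def using inter_ideal[OF D DT qf(4)] .
    have "Q0 \<noteq> {0}" using Qq unfolding quasi_ideal_def by blast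
    then obtain q where q: "q \<in> Q0" "q \<noteq> 0" using qf(1) by blast
    obtain a where a: "a \<in> D" "a \<noteq> 0" "a * 1 \<in> Q0" using nzmult[OF Q DT qf(4) q, of 1] by auto
    have P0nz: "P0 \<noteq> {0}" using a unfolding P0_def by auto
    have "1 \<notin> star_f D st P0"
    proof
      assume "1 \<in> star_f D st P0"
      then obtain G where G: "G \<in> fgF D" "G \<subseteq> P0" "1 \<in> st G" by (auto simp: sf_mem)
      have GD: "G \<subseteq> D" using G(2) unfolding P0_def by blast
      have "st G = st D" using one_full[OF D ss fgF_Fbar[OF D G(1)] GD G(3)] .
      then have eq: "st' (mod_gen T G) = st' T" using lk G(1) GD unfolding linked_def by blast
      note fe = fg_extend[OF D T DT G(1)]
      have "mod_gen T G \<subseteq> Q0" by (rule mg_least[OF qf(4)]) (use G(2) P0_def in blast)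
      then have "st' (mod_gen T G) \<subseteq> star_f T st' Q0" using sf_fg[OF fe(1)] by blast
      moreover have "1 \<in> st' T" using semistarD(4)[OF s' R_Fbar[OF T]] subringD(2)[OF T] by blast
      ultimately have "1 \<in> Q0" using eq qf(6) subringD(2)[OF T] by blast
      then show False using qf(3) by blast
    qed
    then obtain P where P: "quasi_prime D (star_f D st) P" "P0 \<subseteq> P"
      using zorn_quasi[OF D ss P0id P0nz] by blast
    obtain s where s: "s \<in> D - P" "y * s \<in> E" using ell_memD[OF D Q T DT ss y P(1)] by blast
    have "s \<in> T - Q0" using s P(2) DT unfolding P0_def by blast
    then show "\<exists>s\<in>T - Q0. y * s \<in> E" using s(2) by blast
  qed
qed

lemma part4a: "\<forall>E\<in>Fbar T. ell D st E = star_f T (ell D st) E"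
proof
  fix E assume E: "E \<in> Fbar T"
  have ES: "submod T E" using Fbar_submod[OF E] .
  obtain e where e: "e \<in> E" "e \<noteq> 0" using E unfolding Fbar_def submod_def by auto
  show "ell D st E = star_f T (ell D st) E"
  proof
    show "star_f T (ell D st) E \<subseteq> ell D st E"
    proof
      fix x assume "x \<in> star_f T (ell D st) E"
      then obtain F where "F \<in> fgF T" "F \<subseteq> E" "x \<in> ell D st F" by (auto simp: sf_mem)
      then show "x \<in> ell D st E" using ell_mono[OF D Q T DT ss] by blast
    qed
    show "ell D st E \<subseteq> star_f T (ell D st) E"
    proof
      fix x assume x: "x \<in> ell D st E"
      show "x \<in> star_f T (ell D st) E"
      proof (cases "x = 0")
        case True
        note fp = fg_pair[OF T ES e submodD(1)[OF ES]]
        have "0 \<in> ell D st (mod_gen T {e, 0})" using subsetD[OF ell_incl[OF D Q T DT ss] fp(3)] .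
        then show ?thesis unfolding True sf_mem using fp(1,2) by blast
      next
        case False
        define J where "J = {d \<in> D. d * x \<in> E}"
        have Jid: "ideal_of D J" unfolding J_def using colon_ideal[OF D DT ES] by blast
        obtain a where a: "a \<in> D" "a \<noteq> 0" "a * x \<in> E" using nzmult[OF Q DT ES e False] by blast
        have Jnz: "J \<noteq> {0}" using a unfolding J_def by auto
        show ?thesis
        proof (cases "1 \<in> star_f D st J")
          case True
          then obtain G where G: "G \<in> fgF D" "G \<subseteq> J" "1 \<in> st G" by (auto simp: sf_mem)
          obtain S where S: "finite S" "G = mod_gen D S" "G \<noteq> {0}" using G(1) by (rule fgF_obtain)
          define F where "F = mod_gen T ((*) x ` S)"
          have SJ: "S \<subseteq> J" using G(2) S(2) mg_base[OF D] by blast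
          have "\<not> S \<subseteq> {0}"
          proof
            assume "S \<subseteq> {0}"
            then have "G \<subseteq> {0}" using mg_zero[OF D, of S] S(2) by simp
            moreover have "0 \<in> G" using S(2) submodD(1)[OF mg_submod[OF D]] by simp
            ultimately show False using S(3) by blast
          qed
          then obtain s0 where s0: "s0 \<in> S" "s0 \<noteq> 0" by blast
          have "x * s0 \<in> F" unfolding F_def using s0 by (intro mg_base[OF T]) auto
          moreover have "x * s0 \<noteq> 0" using s0 False by auto
          ultimately have "F \<noteq> {0}" by blast
          then have FF: "F \<in> fgF T" unfolding F_def using S(1) by (intro fgF_I) auto
          have FE: "F \<subseteq> E" unfolding F_def
          proof (rule mg_least[OF ES], rule subsetI)
            fix z assume "z \<in> (*) x ` S"
            then obtain t where t: "t \<in> S" "z = x * t" by blast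
            then have "t * x \<in> E" using SJ unfolding J_def by blast
            then show "z \<in> E" using t(2) by (simp add: mult.commute)
          qed
          have "x \<in> ell D st F" unfolding ell_mem
          proof (intro allI impI)
            fix P assume P: "quasi_prime D (star_f D st) P"
            have Pq: "quasi_ideal D (star_f D st) P" "P \<noteq> D" using P unfolding quasi_prime_def by auto
            have "\<not> G \<subseteq> P"
            proof
              assume "G \<subseteq> P"
              then have "1 \<in> star_f D st P" using sf_fg[OF G(1)] G(3) by blast
              then show False using qi_facts(3,6)[OF D Pq] subringD(2)[OF D] by blast
            qed
            then obtain g where g: "g \<in> G" "g \<notin> P" by blast
            have gD: "g \<in> D" using g G(2) unfolding J_def by blast
            have "x * g \<in> (*) x ` G" using g(1) by blast
            then have "x * g \<in> mod_gen D ((*) x ` S)" using S(2) mg_scale[OF D False, of S] by simp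
            then have "x * g \<in> F" unfolding F_def using mg_mono_ring[OF DT] by blast
            then show "\<exists>s\<in>D - P. x * s \<in> F" using gD g(2) by blast
          qed
          then show ?thesis unfolding sf_mem using FF FE by blast
        next
          case False
          then obtain P where P: "quasi_prime D (star_f D st) P" "J \<subseteq> P"
            using zorn_quasi[OF D ss Jid Jnz] by blast
          obtain s where s: "s \<in> D - P" "x * s \<in> E" using ell_memD[OF D Q T DT ss x P(1)] by blast
          then have "s \<in> J" unfolding J_def by (auto simp: mult.commute)
          then show ?thesis using s P(2) by blast
        qed
      qed
    qed
  qed
qed

lemma part4b: "\<forall>E\<in>Fbar T. tilde T (ell D st) E = ell D st E"
proof
  fix E assume E: "E \<in> Fbar T"
  have ES: "submod T E" using Fbar_submod[OF E] .
  have sl: "semistar T (ell D st)" using part1[OF D Q T DT ss] by blast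
  show "tilde T (ell D st) E = ell D st E"
  proof
    show "tilde T (ell D st) E \<subseteq> ell D st E"
      using tilde_le_sf[OF sl E] part4a E by blast
    show "ell D st E \<subseteq> tilde T (ell D st) E"
    proof
      fix y assume y: "y \<in> ell D st E"
      show "y \<in> tilde T (ell D st) E" unfolding tilde_mem
      proof (intro allI impI)
        fix M assume M: "quasi_max T (star_f T (ell D st)) M"
        have Mq: "quasi_ideal T (star_f T (ell D st)) M" "M \<noteq> T" using M unfolding quasi_max_def by auto
        note qf = qi_facts[OF T Mq]
        show "\<exists>s\<in>T - M. y * s \<in> E"
        proof (cases "y = 0")
          case True
          then show ?thesis using qf(3) subringD(2)[OF T] submodD(1)[OF ES] by auto
        next
          case False
          define J where "J = {t \<in> T. t * y \<in> E}"
          have "1 \<in> ell D st J" unfolding ell_mem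
          proof (intro allI impI)
            fix P assume P: "quasi_prime D (star_f D st) P"
            obtain s where s: "s \<in> D - P" "y * s \<in> E" using ell_memD[OF D Q T DT ss y P] by blast
            then have "1 * s \<in> J" unfolding J_def using DT by (auto simp: mult.commute)
            then show "\<exists>s\<in>D - P. 1 * s \<in> J" using s(1) by blast
          qed
          show ?thesis
          proof (rule ccontr)
            assume "\<not> ?thesis"
            then have "J \<subseteq> M" unfolding J_def by (auto simp: mult.commute)
            then have "ell D st J \<subseteq> ell D st M" using ell_mono[OF D Q T DT ss] by blast
            also have "\<dots> = star_f T (ell D st) M" using part4a qf(5) by blast
            finally have "1 \<in> M" using \<open>1 \<in> ell D st J\<close> qf(6) subringD(2)[OF T] by blast
            then show False using qf(3) by blast
          qed
        qed
      qed
    qed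
  qed
qed

end



context
  fixes D T :: "'a::field set" and st :: "'a set \<Rightarrow> 'a set"
  assumes D: "subring D" and Q: "is_quotient_field_of D" and T: "subring T" and DT: "D \<subseteq> T"
    and ss: "semistar D st"
begin

lemma one_ellT: "1 \<in> ell D st T"
  using ell_incl[OF D Q T DT ss] subringD(2)[OF T] by blast

lemma part7:
  assumes s': "semistar T st'"
  shows "linked D T st st' \<longleftrightarrow> sle T (ell D st) (star_f T st')"
proof
  assume lk: "linked D T st st'"
  show "sle T (ell D st) (star_f T st')"
    using part2a[OF D Q T DT ss s' lk] tilde_le_sf[OF D Q T DT ss s'] unfolding sle_def by blast
next
  assume le: "sle T (ell D st) (star_f T st')"
  show "linked D T st st'" unfolding linked_def
  proof (intro allI impI)
    fix F assume F: "F \<in> fgF D \<and> F \<subseteq> D \<and> st F = st D"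
    note fe = fg_extend[OF D T DT, of F]
    have GF: "mod_gen T F \<in> Fbar T" using fgF_Fbar[OF T] fe F by blast
    have GT: "mod_gen T F \<subseteq> T" by (rule mg_least[OF R_submod[OF T]]) (use F DT in blast)
    have "ell D st (mod_gen T F) = ell D st T" using part3a[OF D Q T DT ss] F unfolding linked_def by blast
    then have "1 \<in> ell D st (mod_gen T F)" using one_ellT by simp
    then have "1 \<in> st' (mod_gen T F)" using le GF sf_le[OF T s' GF] unfolding sle_def by blast
    then show "st' (mod_gen T F) = st' T" using one_full[OF T s' GF GT] by blast
  qed
qed

lemma part6:
  assumes s': "semistar T st'"
  shows "linked D T st st' \<longleftrightarrow> linked T T (ell D st) st'"
proof
  assume lk: "linked D T st st'"
  have le: "sle T (ell D st) (star_f T st')" using part7[OF s'] lk by blast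
  show "linked T T (ell D st) st'" unfolding linked_def
  proof (intro allI impI)
    fix F assume F: "F \<in> fgF T \<and> F \<subseteq> T \<and> ell D st F = ell D st T"
    have FF: "F \<in> Fbar T" using fgF_Fbar[OF T] F by blast
    have mg: "mod_gen T F = F" using mg_self[OF T Fbar_submod[OF FF]] .
    have "1 \<in> ell D st F" using one_ellT F by simp
    then have "1 \<in> st' F" using le FF sf_le[OF T s' FF] unfolding sle_def by blast
    then show "st' (mod_gen T F) = st' T" unfolding mg using one_full[OF T s' FF] F by blast
  qed
next
  assume lk: "linked T T (ell D st) st'"
  show "linked D T st st'" unfolding linked_def
  proof (intro allI impI)
    fix F assume F: "F \<in> fgF D \<and> F \<subseteq> D \<and> st F = st D"
    note fe = fg_extend[OF D T DT, of F]
    have G1: "mod_gen T F \<in> fgF T" using fe F by blast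
    have GF: "mod_gen T F \<in> Fbar T" using fgF_Fbar[OF T G1] .
    have GT: "mod_gen T F \<subseteq> T" by (rule mg_least[OF R_submod[OF T]]) (use F DT in blast)
    have "ell D st (mod_gen T F) = ell D st T" using part3a[OF D Q T DT ss] F unfolding linked_def by blast
    then have "st' (mod_gen T (mod_gen T F)) = st' T" using lk G1 GT unfolding linked_def by blast
    then show "st' (mod_gen T F) = st' T" using mg_self[OF T Fbar_submod[OF GF]] by simp
  qed
qed

lemma part5:
  "(\<exists>a. semistar T a \<and> linked D T st a \<and> (\<forall>E\<in>Fbar T. star_f T a E = ell D st E))
      \<and> (\<forall>a. semistar T a \<and> linked D T st a \<and> sle T (star_f T a) (ell D st)
             \<longrightarrow> (\<forall>E\<in>Fbar T. star_f T a E = ell D st E))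
      \<and> (\<forall>a. semistar T a \<and> linked D T st a
             \<and> (\<forall>b. semistar T b \<and> linked D T st b \<and> sle T (star_f T b) (star_f T a)
                    \<longrightarrow> (\<forall>E\<in>Fbar T. star_f T b E = star_f T a E))
             \<longrightarrow> (\<forall>E\<in>Fbar T. star_f T a E = ell D st E))"
proof (intro conjI allI impI)
  have sl: "semistar T (ell D st)" using part1[OF D Q T DT ss] by blast
  have lk: "linked D T st (ell D st)" using part3a[OF D Q T DT ss] .
  have ft: "\<forall>E\<in>Fbar T. ell D st E = star_f T (ell D st) E" using part4a[OF D Q T DT ss] .
  show "\<exists>a. semistar T a \<and> linked D T st a \<and> (\<forall>E\<in>Fbar T. star_f T a E = ell D st E)"
    using sl lk ft by (intro exI[of _ "ell D st"]) auto
  fix a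
  {
    assume a: "semistar T a \<and> linked D T st a \<and> sle T (star_f T a) (ell D st)"
    have "sle T (ell D st) (star_f T a)" using part7 a by blast
    then show "\<forall>E\<in>Fbar T. star_f T a E = ell D st E" using a unfolding sle_def by blast
  }
  assume a: "semistar T a \<and> linked D T st a
             \<and> (\<forall>b. semistar T b \<and> linked D T st b \<and> sle T (star_f T b) (star_f T a)
                    \<longrightarrow> (\<forall>E\<in>Fbar T. star_f T b E = star_f T a E))"
  have le: "sle T (ell D st) (star_f T a)" using part7 a by blast
  have "sle T (star_f T (ell D st)) (star_f T a)" using le ft unfolding sle_def by auto
  then have "\<forall>E\<in>Fbar T. star_f T (ell D st) E = star_f T a E" using a sl lk by blast
  then show "\<forall>E\<in>Fbar T. star_f T a E = ell D st E" using ft by auto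
qed

end

theorem proposition3p12:
  fixes D T :: "'a::field set" and st st' :: "'a set \<Rightarrow> 'a set"
  assumes "subring D" and "is_quotient_field_of D"
    and "subring T" and "D \<subseteq> T"
    and "semistar D st" and "semistar T st'"
  shows
    "(semistar T (ell D st) \<and> stable T (ell D st))
   \<and> (linked D T st st' \<longrightarrow>
        sle T (ell D st) (tilde T st') \<and> sle T (tilde T st') (star_f T st')
        \<and> linked T T (ell D st) st')
   \<and> (linked D T st (ell D st) \<and> linked D D st (tilde D st))
   \<and> (finite_type T (ell D st) \<and> (\<forall>E\<in>Fbar T. tilde T (ell D st) E = ell D st E))
   \<and> ((\<exists>a. semistar T a \<and> linked D T st a \<and> (\<forall>E\<in>Fbar T. star_f T a E = ell D st E))
      \<and> (\<forall>a. semistar T a \<and> linked D T st a \<and> sle T (star_f T a) (ell D st)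
             \<longrightarrow> (\<forall>E\<in>Fbar T. star_f T a E = ell D st E))
      \<and> (\<forall>a. semistar T a \<and> linked D T st a
             \<and> (\<forall>b. semistar T b \<and> linked D T st b \<and> sle T (star_f T b) (star_f T a)
                    \<longrightarrow> (\<forall>E\<in>Fbar T. star_f T b E = star_f T a E))
             \<longrightarrow> (\<forall>E\<in>Fbar T. star_f T a E = ell D st E)))
   \<and> (linked D T st st' \<longleftrightarrow> linked T T (ell D st) st')
   \<and> (linked D T st st' \<longleftrightarrow> sle T (ell D st) (star_f T st'))"
proof -
  note A = assms(1-5)
  have p1: "semistar T (ell D st) \<and> stable T (ell D st)" using part1[OF A] .
  have p2: "linked D T st st' \<longrightarrow>
        sle T (ell D st) (tilde T st') \<and> sle T (tilde T st') (star_f T st')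
        \<and> linked T T (ell D st) st'"
    using part2a[OF A assms(6)] tilde_le_sf[OF A assms(6)] part6[OF A assms(6)]
    unfolding sle_def by blast
  have p3: "linked D T st (ell D st) \<and> linked D D st (tilde D st)"
    using part3a[OF A] part3b[OF A] by blast
  have p4: "finite_type T (ell D st) \<and> (\<forall>E\<in>Fbar T. tilde T (ell D st) E = ell D st E)"
    using part4a[OF A] part4b[OF A] unfolding finite_type_def by blast
  show ?thesis using p1 p2 p3 p4 part5[OF A] part6[OF A assms(6)] part7[OF A assms(6)] by blast
qed


end
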